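(* Let $\{\tau_n\}$ be a nonnegative sequence and $\{b_n\}$ a strictly positive non-decreasing sequence. Let $X$ be a random variable with $\sum_{n=1}^\infty\tau_nnP(|X|\ge b_n)<\infty$. Fix $\nu\in[0,\infty)$ and put $T_k=\sum_{n=1}^kn\tau_n$. Suppose there are constants $C\in(0,\infty)$ and $\theta\in[1,\infty)$ such that $$\frac{b_n^{\nu\theta}}{n^{\theta-1}}\sum_{k=n}^\infty\frac{k^\theta\tau_k}{b_k^{\nu\theta}}\le CT_{n-1}\quad\text{for all }n\ge2,$$ and $$\frac{kb_n^\nu}{b_k^\nu}\le CT_{n-1}\quad\text{whenever }k\ge n\ge2.$$ Then $$\sum_{n=1}^\infty\tau_n\left(\frac{nE[|X|^\nu1_{\{|X|<b_n\}}]}{b_n^\nu}\right)^{\theta}<\infty.$$ *)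

theory Defs
  imports "HOL-Probability.Probability"
begin

text \<open>Real power with the convention 0^0 = 1 (so that |X|^0 = 1), as in E[|X|^nu 1_{|X|<b}].\<close>
definition rpow0 :: "real \<Rightarrow> real \<Rightarrow> real" where
  "rpow0 x a = (if x = 0 then (if a = 0 then 1 else 0) else x powr a)"

end

theory Submission
  imports Defs
begin

lemma bern:
  fixes a b th :: real
  assumes "0 \<le> a" "a \<le> b" "1 \<le> th"
  shows "b powr th - a powr th \<le> th * b powr (th - 1) * (b - a)"
proof (cases "a = 0")
  case True
  show ?thesis
  proof (cases "b = 0")
    case True with \<open>a = 0\<close> show ?thesis by simp
  next
    case False
    then have bp: "b > 0" using assms by simp
    have e: "b powr th = b powr (th - 1) * b" using bp by (simp add: powr_diff)
    have X: "0 \<le> b powr (th - 1) * b" using bp by simp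
    have "b powr (th - 1) * b \<le> th * (b powr (th - 1) * b)"
      using mult_right_mono[OF assms(3) X] by simp
    then show ?thesis using True e by (simp add: mult_ac)
  qed
next
  case False
  then have ap: "a > 0" using assms by simp
  have "th * b powr (th - 1) * (a - b) \<le> a powr th - b powr th"
    using ap assms
    by (intro convex_on_imp_above_tangent[where A = "{0<..}", OF powr_convex])
       (auto intro!: derivative_eq_intros simp: interior_open)
  then show ?thesis by (simp add: algebra_simps)
qed

lemma two_powr:
  fixes u v th :: real
  assumes "0 \<le> u" "0 \<le> v" "0 \<le> th"
  shows "(u + v) powr th \<le> 2 powr th * (u powr th + v powr th)"
proof -
  have "(u + v) powr th \<le> (2 * max u v) powr th"
    using assms by (intro powr_mono2) auto
  also have "\<dots> = 2 powr th * max u v powr th"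
    using assms by (simp add: powr_mult)
  also have "max u v powr th \<le> u powr th + v powr th"
    by (cases "u \<le> v") (auto simp: max_def)
  then have "2 powr th * max u v powr th \<le> 2 powr th * (u powr th + v powr th)"
    by (intro mult_left_mono) auto
  finally show ?thesis .
qed

lemma sum_swap_tri:
  fixes w r :: "nat \<Rightarrow> real"
  shows "(\<Sum>n<N. w n * (\<Sum>j=2..n. r j)) = (\<Sum>j\<in>{2..<N}. r j * (\<Sum>n\<in>{j..<N}. w n))"
proof (induction N)
  case 0
  then show ?case by simp
next
  case (Suc N)
  have A: "(\<Sum>j\<in>{2..<Suc N}. r j * (\<Sum>n\<in>{j..<Suc N}. w n))
        = (\<Sum>j\<in>{2..<Suc N}. r j * (\<Sum>n\<in>{j..<N}. w n)) + w N * (\<Sum>j\<in>{2..<Suc N}. r j)"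
    by (simp add: sum_distrib_left sum_distrib_right sum.distrib[symmetric] algebra_simps)
  have B: "(\<Sum>j\<in>{2..<Suc N}. r j * (\<Sum>n\<in>{j..<N}. w n)) = (\<Sum>j\<in>{2..<N}. r j * (\<Sum>n\<in>{j..<N}. w n))"
    by (cases "2 \<le> N") auto
  have C: "{2..<Suc N} = {2..N}" by auto
  show ?case using Suc A B C by simp
qed

lemma abstract:
  fixes \<tau> b p e :: "nat \<Rightarrow> real" and \<nu> C \<theta> Mb :: real
  assumes tau: "\<And>n. 1 \<le> n \<Longrightarrow> 0 \<le> \<tau> n"
    and bpos: "\<And>n. 1 \<le> n \<Longrightarrow> 0 < b n"
    and nu: "0 \<le> \<nu>" and Cpos: "0 < C" and th: "1 \<le> \<theta>"
    and p0: "\<And>n. 0 \<le> p n"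
    and panti: "\<And>n. 1 \<le> n \<Longrightarrow> p (Suc n) \<le> p n"
    and mom: "\<And>N. (\<Sum>i=1..N. real i * \<tau> i * p i) \<le> Mb"
    and e0: "\<And>n. 1 \<le> n \<Longrightarrow> 0 \<le> e n"
    and e1: "e 1 \<le> b 1 powr \<nu>"
    and estep: "\<And>m. 1 \<le> m \<Longrightarrow> e (Suc m) \<le> e m + b (Suc m) powr \<nu> * (p m - p (Suc m))"
    and cond1: "\<And>n. 2 \<le> n \<Longrightarrow>
        summable (\<lambda>j. real (j + n) powr \<theta> * \<tau> (j + n) / b (j + n) powr (\<nu> * \<theta>)) \<and>
        b n powr (\<nu> * \<theta>) / real n powr (\<theta> - 1) *
          (\<Sum>j. real (j + n) powr \<theta> * \<tau> (j + n) / b (j + n) powr (\<nu> * \<theta>))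
        \<le> C * (\<Sum>i=1..n-1. real i * \<tau> i)"
    and cond2: "\<And>k n. 2 \<le> n \<Longrightarrow> n \<le> k \<Longrightarrow>
        real k * b n powr \<nu> / b k powr \<nu> \<le> C * (\<Sum>i=1..n-1. real i * \<tau> i)"
  shows "summable (\<lambda>n. \<tau> n * (real n * e n / b n powr \<nu>) powr \<theta>)"
proof -
  define T where "T n = (\<Sum>i=1..n. real i * \<tau> i)" for n
  define x where "x j = b j powr \<nu> * (p (j-1) - p j)" for j
  define s where "s n = (\<Sum>j=2..n. x j)" for n
  define w where "w k = real k powr \<theta> * \<tau> k / b k powr (\<nu>*\<theta>)" for k
  define r where "r j = (p (j-1) - p j) * b j powr (\<nu>*\<theta>) / real j powr (\<theta>-1)" for j
  define K where "K = \<theta> * (C*Mb) powr (\<theta>-1)"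
  have Mb: "0 \<le> Mb" using mom[of 0] by simp
  have T0: "0 \<le> T n" for n unfolding T_def by (intro sum_nonneg) (simp add: tau)
  have TSuc: "T (Suc k) = T k + real (Suc k) * \<tau> (Suc k)" for k
    unfolding T_def by simp
  have q0: "0 \<le> p (j-1) - p j" if "2 \<le> j" for j
    using panti[of "j-1"] that by (simp add: Suc_diff_1)
  have x0: "0 \<le> x j" if "2 \<le> j" for j
    unfolding x_def using q0[OF that] by simp
  have s0: "0 \<le> s n" for n unfolding s_def by (intro sum_nonneg) (auto intro: x0)
  have sSuc: "s (Suc n) = s n + x (Suc n)" if "1 \<le> n" for n
    unfolding s_def using that by simp
  have s1: "s 1 = 0" unfolding s_def by simp
  have w0: "0 \<le> w n" for n
  proof (cases "n = 0")
    case True then show ?thesis by (simp add: w_def)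
  next
    case False then show ?thesis unfolding w_def using tau[of n] by simp
  qed
  have r0: "0 \<le> r j" if "2 \<le> j" for j
    unfolding r_def using q0[OF that] by simp
  have K0: "0 \<le> K" unfolding K_def using th by simp
  have A: "e n \<le> b 1 powr \<nu> + s n" if "1 \<le> n" for n
    using that
  proof (induction n rule: nat_induct_at_least)
    case base then show ?case using e1 s1 by simp
  next
    case (Suc n)
    have "e (Suc n) \<le> e n + x (Suc n)" using estep[OF Suc(1)] by (simp add: x_def)
    then show ?case using Suc sSuc[OF Suc(1)] by simp
  qed
  have abel: "(\<Sum>i=2..Suc k. T (i-1) * (p (i-1) - p i)) + T k * p (Suc k)
              = (\<Sum>i=1..k. real i * \<tau> i * p i)" for k
  proof (induction k)
    case 0 then show ?case by (simp add: T_def)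
  next
    case (Suc k)
    have "(\<Sum>i=2..Suc (Suc k). T (i-1) * (p (i-1) - p i))
        = (\<Sum>i=2..Suc k. T (i-1) * (p (i-1) - p i)) + T (Suc k) * (p (Suc k) - p (Suc (Suc k)))"
      by simp
    then show ?case using Suc TSuc[of k] by (simp add: algebra_simps)
  qed
  have abel_le: "(\<Sum>i=2..Suc k. T (i-1) * (p (i-1) - p i)) \<le> Mb" for k
  proof -
    have "0 \<le> T k * p (Suc k)" by (intro mult_nonneg_nonneg T0 p0)
    then show ?thesis using abel[of k] mom[of k] by linarith
  qed
  have B: "s j \<le> C * Mb * b j powr \<nu> / real j" if "2 \<le> j" for j
  proof -
    have bj: "0 < b j powr \<nu>" using bpos[of j] that by simp
    have jp: "0 < real j" using that by simp
    have "s j \<le> (\<Sum>i=2..j. C * b j powr \<nu> / real j * (T (i-1) * (p (i-1) - p i)))"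
      unfolding s_def x_def
    proof (intro sum_mono)
      fix i assume i: "i \<in> {2..j}"
      have "real j * b i powr \<nu> / b j powr \<nu> \<le> C * T (i-1)"
        using cond2[of i j] i unfolding T_def by auto
      then have "b i powr \<nu> \<le> C * b j powr \<nu> / real j * T (i-1)"
        using bj jp by (simp add: field_simps)
      then show "b i powr \<nu> * (p (i - 1) - p i) \<le> C * b j powr \<nu> / real j * (T (i - 1) * (p (i - 1) - p i))"
        using mult_right_mono[OF _ q0[of i], of "b i powr \<nu>" "C * b j powr \<nu> / real j * T (i-1)"] i
        by (simp only: mult.assoc) auto
    qed
    also have "\<dots> = C * b j powr \<nu> / real j * (\<Sum>i=2..j. T (i-1) * (p (i-1) - p i))"
      by (simp add: sum_distrib_left)
    also have "\<dots> \<le> C * b j powr \<nu> / real j * Mb"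
    proof (intro mult_left_mono)
      show "(\<Sum>i=2..j. T (i-1) * (p (i-1) - p i)) \<le> Mb"
        using abel_le[of "j-1"] that by (simp add: Suc_diff_1)
    qed (use Cpos bj jp in simp)
    finally show ?thesis by (simp add: mult_ac)
  qed
  have D: "s n powr \<theta> \<le> \<theta> * (\<Sum>j=2..n. x j * s j powr (\<theta>-1))" if "1 \<le> n" for n
    using that
  proof (induction n rule: nat_induct_at_least)
    case base then show ?case using s1 by simp
  next
    case (Suc n)
    have "s (Suc n) powr \<theta> - s n powr \<theta> \<le> \<theta> * s (Suc n) powr (\<theta>-1) * (s (Suc n) - s n)"
      using bern[of "s n" "s (Suc n)" \<theta>] s0 sSuc[OF Suc(1)] x0[of "Suc n"] Suc(1) th by simp
    then show ?case using Suc sSuc[OF Suc(1)] by (simp add: algebra_simps)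
  qed
  have E: "x j * s j powr (\<theta>-1) \<le> (C*Mb) powr (\<theta>-1) * r j" if "2 \<le> j" for j
  proof -
    have bj: "0 < b j" using bpos[of j] that by simp
    have jp: "0 < real j" using that by simp
    have "s j powr (\<theta>-1) \<le> (C * Mb * b j powr \<nu> / real j) powr (\<theta>-1)"
      using B[OF that] s0 th by (intro powr_mono2) auto
    also have "\<dots> = (C*Mb) powr (\<theta>-1) * b j powr (\<nu>*(\<theta>-1)) / real j powr (\<theta>-1)"
      using Cpos Mb bj jp by (simp add: powr_mult powr_divide powr_powr)
    finally have "x j * s j powr (\<theta>-1) \<le> x j * ((C*Mb) powr (\<theta>-1) * b j powr (\<nu>*(\<theta>-1)) / real j powr (\<theta>-1))"
      using x0[OF that] by (intro mult_left_mono)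
    also have "\<dots> = (C*Mb) powr (\<theta>-1) * ((p (j-1) - p j) * (b j powr \<nu> * b j powr (\<nu>*(\<theta>-1))) / real j powr (\<theta>-1))"
      unfolding x_def by (simp add: field_simps)
    also have "b j powr \<nu> * b j powr (\<nu>*(\<theta>-1)) = b j powr (\<nu>*\<theta>)"
      using bj by (simp add: powr_add[symmetric] algebra_simps)
    finally show ?thesis unfolding r_def by simp
  qed
  define t2 where "t2 n = \<tau> n * (real n * s n / b n powr \<nu>) powr \<theta>" for n
  have F: "t2 n \<le> K * w n * (\<Sum>j=2..n. r j)" for n
  proof (cases "n = 0")
    case True then show ?thesis by (simp add: t2_def w_def)
  next
    case False
    then have n1: "1 \<le> n" by simp
    have bn: "0 < b n" using bpos[OF n1] .
    have "(real n * s n / b n powr \<nu>) powr \<theta> = real n powr \<theta> / b n powr (\<nu>*\<theta>) * s n powr \<theta>"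
      using bn s0[of n] by (simp add: powr_mult powr_divide powr_powr)
    also have "\<dots> \<le> real n powr \<theta> / b n powr (\<nu>*\<theta>) * (\<theta> * (\<Sum>j=2..n. x j * s j powr (\<theta>-1)))"
      using D[OF n1] by (intro mult_left_mono) auto
    also have "\<dots> \<le> real n powr \<theta> / b n powr (\<nu>*\<theta>) * (\<theta> * (\<Sum>j=2..n. (C*Mb) powr (\<theta>-1) * r j))"
      using E th by (intro mult_left_mono sum_mono) auto
    also have "\<dots> = K * (real n powr \<theta> / b n powr (\<nu>*\<theta>)) * (\<Sum>j=2..n. r j)"
      unfolding K_def by (simp add: sum_distrib_left[symmetric])
    finally have "t2 n \<le> \<tau> n * (K * (real n powr \<theta> / b n powr (\<nu>*\<theta>)) * (\<Sum>j=2..n. r j))"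
      unfolding t2_def using tau[OF n1] by (intro mult_left_mono)
    then show ?thesis unfolding w_def by (simp add: algebra_simps)
  qed
  have t20: "0 \<le> t2 n" for n
  proof (cases "n = 0")
    case True then show ?thesis by (simp add: t2_def)
  next
    case False then show ?thesis unfolding t2_def using tau[of n] by simp
  qed
  have tail: "r j * (\<Sum>n\<in>{j..<N}. w n) \<le> C * (T (j-1) * (p (j-1) - p j))" if "2 \<le> j" for j N
  proof -
    have c1: "summable (\<lambda>k. w (k + j))"
      and c2: "b j powr (\<nu>*\<theta>) / real j powr (\<theta>-1) * (\<Sum>k. w (k + j)) \<le> C * T (j-1)"
      using cond1[OF that] unfolding w_def T_def by auto
    have "(\<Sum>n\<in>{j..<N}. w n) \<le> (\<Sum>k. w (k + j))"
    proof (cases "j \<le> N")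
      case True
      have "(\<Sum>n\<in>{j..<N}. w n) = (\<Sum>k<N-j. w (k + j))"
        by (simp add: sum.atLeastLessThan_shift_0 atLeast0LessThan add.commute comp_def)
      also have "\<dots> \<le> (\<Sum>k. w (k + j))"
        using c1 w0 by (intro sum_le_suminf) auto
      finally show ?thesis .
    next
      case False
      then show ?thesis using c1 w0 by (simp add: suminf_nonneg)
    qed
    then have "r j * (\<Sum>n\<in>{j..<N}. w n) \<le> r j * (\<Sum>k. w (k + j))"
      using r0[OF that] by (intro mult_left_mono)
    also have "\<dots> = (p (j-1) - p j) * (b j powr (\<nu>*\<theta>) / real j powr (\<theta>-1) * (\<Sum>k. w (k + j)))"
      unfolding r_def by simp
    also have "\<dots> \<le> (p (j-1) - p j) * (C * T (j-1))"
      using c2 q0[OF that] by (intro mult_left_mono)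
    finally show ?thesis by (simp add: algebra_simps)
  qed
  have H: "(\<Sum>n<N. t2 n) \<le> K * (C * Mb)" for N
  proof -
    have "(\<Sum>n<N. t2 n) \<le> (\<Sum>n<N. K * w n * (\<Sum>j=2..n. r j))"
      using F by (intro sum_mono)
    also have "\<dots> = K * (\<Sum>n<N. w n * (\<Sum>j=2..n. r j))"
      by (simp add: sum_distrib_left algebra_simps)
    also have "(\<Sum>n<N. w n * (\<Sum>j=2..n. r j)) = (\<Sum>j\<in>{2..<N}. r j * (\<Sum>n\<in>{j..<N}. w n))"
      by (rule sum_swap_tri)
    also have "\<dots> \<le> (\<Sum>j\<in>{2..<N}. C * (T (j-1) * (p (j-1) - p j)))"
      using tail by (intro sum_mono) auto
    also have "\<dots> = C * (\<Sum>j\<in>{2..<N}. T (j-1) * (p (j-1) - p j))"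
      by (simp add: sum_distrib_left)
    also have "(\<Sum>j\<in>{2..<N}. T (j-1) * (p (j-1) - p j)) \<le> Mb"
    proof (cases "2 \<le> N")
      case True
      then have "{2..<N} = {2..Suc (N-2)}" by auto
      then show ?thesis using abel_le[of "N-2"] by simp
    next
      case False
      then show ?thesis using Mb by simp
    qed
    then have "K * (C * (\<Sum>j\<in>{2..<N}. T (j-1) * (p (j-1) - p j))) \<le> K * (C * Mb)"
      using K0 Cpos by (intro mult_left_mono) auto
    finally show ?thesis using K0 by (simp add: mult_left_mono)
  qed
  have S2: "summable t2"
    using t20 H by (intro summableI_nonneg_bounded)
  have S1: "summable w"
  proof -
    have "summable (\<lambda>j. w (j + 2))" using cond1[of 2] unfolding w_def by simp
    then show ?thesis by (rule summable_iff_shift[THEN iffD1])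
  qed
  have S: "summable (\<lambda>n. 2 powr \<theta> * (b 1 powr (\<nu>*\<theta>) * w n + t2 n))"
    using S1 S2 by (intro summable_mult summable_add summable_mult)
  show ?thesis
  proof (rule summable_comparison_test[OF _ S], intro exI allI impI)
    fix n :: nat assume "0 \<le> n"
    show "norm (\<tau> n * (real n * e n / b n powr \<nu>) powr \<theta>) \<le> 2 powr \<theta> * (b 1 powr (\<nu>*\<theta>) * w n + t2 n)"
    proof (cases "n = 0")
      case True then show ?thesis by (simp add: w_def t2_def)
    next
      case False
      then have n1: "1 \<le> n" by simp
      have bn: "0 < b n" using bpos[OF n1] .
      have b1: "0 < b 1" using bpos[of 1] by simp
      define u where "u = real n * b 1 powr \<nu> / b n powr \<nu>"
      define v where "v = real n * s n / b n powr \<nu>"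
      have u0: "0 \<le> u" unfolding u_def by simp
      have v0: "0 \<le> v" unfolding v_def using s0[of n] by simp
      have a0: "0 \<le> real n * e n / b n powr \<nu>" using e0[OF n1] by simp
      have "real n * e n / b n powr \<nu> \<le> u + v"
        unfolding u_def v_def using A[OF n1] bn
        by (simp add: add_divide_distrib[symmetric] distrib_left[symmetric] divide_right_mono mult_left_mono)
      then have "(real n * e n / b n powr \<nu>) powr \<theta> \<le> (u + v) powr \<theta>"
        using a0 th by (intro powr_mono2) auto
      also have "\<dots> \<le> 2 powr \<theta> * (u powr \<theta> + v powr \<theta>)"
        using u0 v0 th by (intro two_powr) auto
      finally have Z: "\<tau> n * (real n * e n / b n powr \<nu>) powr \<theta> \<le> \<tau> n * (2 powr \<theta> * (u powr \<theta> + v powr \<theta>))"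
        using tau[OF n1] by (intro mult_left_mono)
      have U: "\<tau> n * u powr \<theta> = b 1 powr (\<nu>*\<theta>) * w n"
        unfolding u_def w_def using bn b1 by (simp add: powr_mult powr_divide powr_powr)
      have V: "\<tau> n * v powr \<theta> = t2 n" unfolding v_def t2_def by simp
      have "\<tau> n * (2 powr \<theta> * (u powr \<theta> + v powr \<theta>)) = 2 powr \<theta> * (\<tau> n * u powr \<theta> + \<tau> n * v powr \<theta>)"
        by (simp add: algebra_simps)
      then have "\<tau> n * (real n * e n / b n powr \<nu>) powr \<theta> \<le> 2 powr \<theta> * (b 1 powr (\<nu>*\<theta>) * w n + t2 n)"
        using Z U V by (simp only:)
      then show ?thesis using tau[OF n1] a0 by simp
    qed
  qed
qed

lemma rpow0_nonneg: "0 \<le> rpow0 x a"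
  unfolding rpow0_def by auto

lemma rpow0_le: "0 \<le> y \<Longrightarrow> y \<le> c \<Longrightarrow> 0 < c \<Longrightarrow> 0 \<le> a \<Longrightarrow> rpow0 y a \<le> c powr a"
  unfolding rpow0_def by (auto intro: powr_mono2)

lemma rpow0_meas[measurable]: "(\<lambda>y. rpow0 y a) \<in> borel_measurable borel"
  unfolding rpow0_def by measurable

theorem lemma5:
  fixes M :: "'a measure" and X :: "'a \<Rightarrow> real"
    and \<tau> b :: "nat \<Rightarrow> real" and \<nu> C \<theta> :: real
  assumes "prob_space M"
    and "X \<in> borel_measurable M"
    and tau_nonneg: "\<And>n. 1 \<le> n \<Longrightarrow> 0 \<le> \<tau> n"
    and b_pos: "\<And>n. 1 \<le> n \<Longrightarrow> 0 < b n"
    and b_mono: "\<And>n. 1 \<le> n \<Longrightarrow> b n \<le> b (Suc n)"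
    and moment: "summable (\<lambda>n. \<tau> (Suc n) * real (Suc n) *
                    measure M {x \<in> space M. \<bar>X x\<bar> \<ge> b (Suc n)})"
    and "0 \<le> \<nu>"
    and "0 < C"
    and "1 \<le> \<theta>"
    and cond1: "\<And>n. 2 \<le> n \<Longrightarrow>
        summable (\<lambda>j. real (j + n) powr \<theta> * \<tau> (j + n) / b (j + n) powr (\<nu> * \<theta>)) \<and>
        b n powr (\<nu> * \<theta>) / real n powr (\<theta> - 1) *
          (\<Sum>j. real (j + n) powr \<theta> * \<tau> (j + n) / b (j + n) powr (\<nu> * \<theta>))
        \<le> C * (\<Sum>i=1..n-1. real i * \<tau> i)"
    and cond2: "\<And>k n. 2 \<le> n \<Longrightarrow> n \<le> k \<Longrightarrow>
        real k * b n powr \<nu> / b k powr \<nu> \<le> C * (\<Sum>i=1..n-1. real i * \<tau> i)"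
  shows "summable (\<lambda>n. \<tau> (Suc n) *
           (real (Suc n) *
              integral\<^sup>L M (\<lambda>x. rpow0 \<bar>X x\<bar> \<nu> * indicator {y. \<bar>y\<bar> < b (Suc n)} (X x))
            / b (Suc n) powr \<nu>) powr \<theta>)"
proof -
  interpret prob_space M by fact
  note Xm[measurable] = \<open>X \<in> borel_measurable M\<close>
  define p where "p n = measure M {x \<in> space M. \<bar>X x\<bar> \<ge> b n}" for n
  define f where "f n x = rpow0 \<bar>X x\<bar> \<nu> * indicator {y. \<bar>y\<bar> < b n} (X x)" for n x
  define e where "e n = integral\<^sup>L M (f n)" for n
  define Mb where "Mb = (\<Sum>n. \<tau> (Suc n) * real (Suc n) * p (Suc n))"
  have Aset[measurable]: "{x \<in> space M. \<bar>X x\<bar> \<ge> c} \<in> sets M" for c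
    by measurable
  have fm[measurable]: "f n \<in> borel_measurable M" for n
    unfolding f_def by measurable
  have f0: "0 \<le> f n x" for n x
    unfolding f_def by (simp add: rpow0_nonneg)
  have fle: "f n x \<le> b n powr \<nu>" if "1 \<le> n" for n x
    using b_pos[OF that] \<open>0 \<le> \<nu>\<close>
    unfolding f_def by (auto simp: indicator_def intro: rpow0_le)
  have fint: "integrable M (f n)" if "1 \<le> n" for n
    by (rule integrable_const_bound[where B = "b n powr \<nu>"]) (use f0 fle[OF that] in auto)
  have indint: "integrable M (indicator {x \<in> space M. \<bar>X x\<bar> \<ge> c} :: 'a \<Rightarrow> real)" for c
    by (intro integrable_real_indicator) (auto simp: less_top[symmetric])
  have main: "summable (\<lambda>n. \<tau> n * (real n * e n / b n powr \<nu>) powr \<theta>)"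
  proof (rule abstract[where p = p and Mb = Mb, OF tau_nonneg b_pos assms(7-9) _ _ _ _ _ _ cond1 cond2])
    show "0 \<le> p n" for n unfolding p_def by simp
    show "p (Suc n) \<le> p n" if "1 \<le> n" for n
      unfolding p_def using b_mono[OF that] by (intro finite_measure_mono) auto
    show "(\<Sum>i=1..N. real i * \<tau> i * p i) \<le> Mb" for N
    proof -
      have "(\<Sum>i=1..N. real i * \<tau> i * p i) = (\<Sum>n<N. \<tau> (Suc n) * real (Suc n) * p (Suc n))"
        by (simp add: sum.atLeast1_atMost_eq mult_ac)
      also have "\<dots> \<le> Mb" unfolding Mb_def
        using moment tau_nonneg unfolding p_def
        by (intro sum_le_suminf) auto
      finally show ?thesis .
    qed
    show "0 \<le> e n" for n unfolding e_def using f0 by simp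
    show "e 1 \<le> b 1 powr \<nu>"
    proof -
      have "e 1 \<le> integral\<^sup>L M (\<lambda>x. b 1 powr \<nu>)"
        unfolding e_def using fint[of 1] fle[of 1] by (intro integral_mono) auto
      then show ?thesis by (simp add: prob_space)
    qed
    show "e (Suc m) \<le> e m + b (Suc m) powr \<nu> * (p m - p (Suc m))" if "1 \<le> m" for m
    proof -
      let ?A = "{x \<in> space M. \<bar>X x\<bar> \<ge> b m}"
      let ?B = "{x \<in> space M. \<bar>X x\<bar> \<ge> b (Suc m)}"
      have bm: "0 < b m" using b_pos[OF that] .
      have bmm: "b m \<le> b (Suc m)" using b_mono[OF that] .
      have pw: "f (Suc m) x \<le> f m x + b (Suc m) powr \<nu> * (indicator ?A x - indicator ?B x)"
        if "x \<in> space M" for x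
      proof -
        consider "\<bar>X x\<bar> < b m" | "b m \<le> \<bar>X x\<bar> \<and> \<bar>X x\<bar> < b (Suc m)" | "b (Suc m) \<le> \<bar>X x\<bar>"
          by linarith
        then show ?thesis
        proof cases
          case 1 then show ?thesis using that bmm by (simp add: f_def indicator_def)
        next
          case 2 then show ?thesis using that bmm bm \<open>0 \<le> \<nu>\<close>
            by (simp add: f_def indicator_def rpow0_le)
        next
          case 3 then show ?thesis using that bmm by (simp add: f_def indicator_def)
        qed
      qed
      have "e (Suc m) \<le> integral\<^sup>L M (\<lambda>x. f m x + b (Suc m) powr \<nu> * (indicator ?A x - indicator ?B x))"
        unfolding e_def using pw fint that indint
        by (intro integral_mono) auto
      also have "\<dots> = e m + b (Suc m) powr \<nu> * (p m - p (Suc m))"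
        unfolding e_def p_def using fint that indint
        by (simp add: integral_add integral_diff)
      finally show ?thesis .
    qed
  qed
  have shift: "summable (\<lambda>n. g (Suc n))" if "summable g" for g :: "nat \<Rightarrow> real"
    using that by (simp add: summable_Suc_iff)
  show ?thesis
    using shift[OF main] unfolding e_def f_def .
qed

end
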